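(* Consider a two-asset G3M with fee parameter $\gamma\in(0,1)$ and a continuous reference price process $(S_t)_{t\ge0}$, $S_t>0$, with initial pool price $P_0$ satisfying $\gamma P_0\le S_0\le\gamma^{-1}P_0$. Assume there are no noise traders, the reference market is frictionless with infinite liquidity, and arbitrageurs continuously monitor and immediately act on arbitrage opportunities (so the pool price is moved only by arbitrage trades keeping it within the no-arbitrage band $[\gamma S_t,\gamma^{-1}S_t]$). Write $\ln P_t=\ln P_0+U_t-L_t$, where $L_t$ (resp. $U_t$) is the cumulative decrease (resp. increase) of the log pool price caused by arbitrage trades selling $X$ to (resp. buying $X$ from) the pool. Then, with $Z_t=\ln(S_t/P_t)$: (a) $Z_t=\ln S_t-\ln P_0+L_t-U_t$ and $Z_t\in[\ln\gamma,-\ln\gamma]$ for all $t\ge0$; (b) $L_t$ and $U_t$ are non-decreasing and continuous with $L_0=U_0=0$; (c) $L_t$ increases only when $Z_t=\ln\gamma$ and $U_t$ increases only when $Z_t=-\ln\gamma$. Furthermore, $$L_t=\sup_{0\le s\le t}\big(-\ln(\gamma P_0)+\ln S_s-U_s\big)^-,\qquad U_t=\sup_{0\le s\le t}\big(\ln(\gamma^{-1}P_0)-\ln S_s-L_s\big)^-,$$ where $(a)^-=\max\{-a,0\}$.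
   Context: $P_t$ is the G3M pool price of asset $X$ in units of $Y$ and $S_t$ the reference-market price. A process "increases only when $Z_t=a$" means that every point of increase of the process is a time $t$ with $Z_t=a$. *)

theory Defs
  imports "HOL-Analysis.Analysis"
begin

definition neg_part :: "real \<Rightarrow> real" where
  "neg_part a = max (- a) 0"

text \<open>t is a point of increase of f on the time axis [0,\<infinity>):
  f strictly increases across every neighbourhood of t (left end clamped at time 0).\<close>
definition incr_point :: "(real \<Rightarrow> real) \<Rightarrow> real \<Rightarrow> bool" where
  "incr_point f t \<longleftrightarrow> 0 \<le> t \<and> (\<forall>\<epsilon>>0. f (max 0 (t - \<epsilon>)) < f (t + \<epsilon>))"

end

theory Submission imports Defs begin

lemma left_gap_incr:
  assumes "mono_on {0..} F" "0<t" "e>0" "\<forall>s. 0\<le>s \<and> s<t \<longrightarrow> F s \<le> F t - e"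
  shows "incr_point F t"
  unfolding incr_point_def
proof (intro conjI allI impI)
  show "0 \<le> t" using assms by simp
  fix \<epsilon> :: real assume "\<epsilon> > 0"
  have "F (max 0 (t-\<epsilon>)) \<le> F t - e" using assms(4) \<open>\<epsilon>>0\<close> \<open>0<t\<close> by auto
  moreover have "F t \<le> F (t+\<epsilon>)" using assms(1) \<open>\<epsilon>>0\<close> \<open>0<t\<close> by (auto intro: mono_onD)
  ultimately show "F (max 0 (t-\<epsilon>)) < F (t+\<epsilon>)" using \<open>e>0\<close> by linarith
qed

lemma transfer_gap:
  fixes f G :: "real \<Rightarrow> real"
  assumes "mono_on {0..} G" "0<t" "e>0" "continuous (at t within {0..}) f"
    "\<forall>s. 0\<le>s \<and> s<t \<longrightarrow> G s \<le> G t + (f s - f t) - e"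
  shows "\<exists>e'>0. \<forall>s. 0\<le>s \<and> s<t \<longrightarrow> G s \<le> G t - e'"
proof -
  from assms(4) obtain d where d: "d>0" "\<forall>s\<in>{0..}. dist s t < d \<longrightarrow> dist (f s) (f t) < e/2"
    unfolding continuous_within_eps_delta using \<open>e>0\<close> by (meson half_gt_zero)
  have "G s \<le> G t - e/2" if s: "0\<le>s" "s<t" for s
  proof -
    define s' where "s' = max s (t - d/2)"
    have s': "0 \<le> s'" "s' < t" "s \<le> s'" "dist s' t < d" using s d unfolding s'_def dist_real_def by auto
    have "G s \<le> G s'" using assms(1) s' s by (auto intro: mono_onD)
    also have "G s' \<le> G t + (f s' - f t) - e" using assms(5) s' by auto
    also have "f s' - f t < e/2"
    proof -
      have "dist (f s') (f t) < e/2" using d(2) s' by auto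
      moreover have "f s' - f t \<le> dist (f s') (f t)" unfolding dist_real_def by simp
      ultimately show ?thesis by linarith
    qed
    finally show ?thesis by simp
  qed
  thus ?thesis using \<open>e>0\<close> by (intro exI[of _ "e/2"]) auto
qed

lemma cont_from_no_gap:
  fixes F :: "real \<Rightarrow> real"
  assumes "mono_on {0..} F" "\<forall>t\<ge>0. continuous (at_right t) F"
    "\<forall>t>0. \<not> (\<exists>e>0. \<forall>s. 0\<le>s \<and> s<t \<longrightarrow> F s \<le> F t - e)"
  shows "continuous_on {0..} F"
  unfolding continuous_on_iff
proof (intro ballI allI impI)
  fix t e :: real assume t: "t \<in> {0..}" and e: "e > 0"
  have "(F \<longlongrightarrow> F t) (at_right t)" using assms(2) t by (simp add: continuous_within)
  then have "eventually (\<lambda>x. dist (F x) (F t) < e) (at_right t)" using e by (rule tendstoD)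
  then obtain b where b: "b > t" "\<forall>y>t. y < b \<longrightarrow> dist (F y) (F t) < e"
    unfolding eventually_at_right_field by blast
  have "\<exists>d2>0. \<forall>s. 0\<le>s \<and> s<t \<and> t - s < d2 \<longrightarrow> F s > F t - e"
  proof (cases "t > 0")
    case True
    show ?thesis
    proof (rule ccontr)
      assume H: "\<not> ?thesis"
      have "\<forall>s. 0\<le>s \<and> s<t \<longrightarrow> F s \<le> F t - e"
      proof (intro allI impI)
        fix s assume s: "0\<le>s \<and> s<t"
        from H s obtain x where x: "0\<le>x" "x<t" "t-x < t-s" "F x \<le> F t - e"
          by (metis diff_gt_0_iff_gt not_le)
        have "F s \<le> F x" using assms(1) s x by (auto intro: mono_onD)
        thus "F s \<le> F t - e" using x by simp
      qed
      thus False using assms(3) True e by blast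
    qed
  next
    case False thus ?thesis using t by (intro exI[of _ 1]) auto
  qed
  then obtain d2 where d2: "d2>0" "\<forall>s. 0\<le>s \<and> s<t \<and> t - s < d2 \<longrightarrow> F s > F t - e" by blast
  show "\<exists>d>0. \<forall>x'\<in>{0..}. dist x' t < d \<longrightarrow> dist (F x') (F t) < e"
  proof (intro exI[of _ "min d2 (b - t)"] conjI ballI impI)
    show "0 < min d2 (b - t)" using d2 b by simp
    fix x' :: real assume x': "x' \<in> {0..}" "dist x' t < min d2 (b - t)"
    consider "x' < t" | "x' = t" | "x' > t" by linarith
    thus "dist (F x') (F t) < e"
    proof cases
      case 1
      have "F x' \<le> F t" using assms(1) x' 1 t by (auto intro: mono_onD)
      moreover have "F x' > F t - e" using d2(2) x' 1 by (auto simp: dist_real_def)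
      ultimately show ?thesis by (simp add: dist_real_def)
    next
      case 2 thus ?thesis using e by simp
    next
      case 3 thus ?thesis using b x' by (auto simp: dist_real_def)
    qed
  qed
qed

lemma sup_formula:
  fixes F g :: "real \<Rightarrow> real"
  assumes "continuous_on {0..} F" "mono_on {0..} F" "F 0 = 0" "t \<ge> 0"
    "\<forall>s\<ge>0. - g s \<le> F s" "\<forall>s. incr_point F s \<longrightarrow> - g s = F s"
  shows "F t = (SUP s\<in>{0..t}. neg_part (g s))"
proof -
  have Fnn: "F s \<ge> 0" if "s \<ge> 0" for s using assms(2,3) that by (metis atLeast_iff mono_onD order_refl)
  have ub: "x \<le> F t" if "x \<in> (\<lambda>s. neg_part (g s)) ` {0..t}" for x
  proof -
    from that obtain s where s: "s \<in> {0..t}" "x = neg_part (g s)" by auto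
    have "F s \<le> F t" using assms(2) s by (auto intro: mono_onD)
    thus ?thesis using s assms(5) Fnn[of s] unfolding neg_part_def by auto
  qed
  have "\<exists>s\<in>{0..t}. neg_part (g s) = F t"
  proof (cases "F t = 0")
    case True
    have "neg_part (g 0) = 0" using assms(5,3) unfolding neg_part_def by (metis max.absorb2 order_refl)
    thus ?thesis using True assms(4) by force
  next
    case False
    define A where "A = {s \<in> {0..t}. F s = F t}"
    have cA: "closed A" unfolding A_def
      by (rule continuous_closed_preimage_constant) (use continuous_on_subset[OF assms(1)] in auto)
    have "t \<in> A" using assms(4) A_def by auto
    hence tauA: "Inf A \<in> A" using cA by (intro closed_contains_Inf) (auto simp: A_def bdd_below_def)
    define \<tau> where "\<tau> = Inf A"
    have tau: "0 \<le> \<tau>" "\<tau> \<le> t" "F \<tau> = F t" using tauA unfolding \<tau>_def A_def by auto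
    have low: "\<tau> \<le> s" if "s \<in> A" for s
      unfolding \<tau>_def using that by (intro cInf_lower) (auto simp: A_def bdd_below_def)
    have "\<tau> \<noteq> 0" using tau False assms(3) by auto
    have "incr_point F \<tau>" unfolding incr_point_def
    proof (intro conjI allI impI)
      show "0 \<le> \<tau>" by fact
      fix \<epsilon> :: real assume "\<epsilon> > 0"
      define m where "m = max 0 (\<tau> - \<epsilon>)"
      have m: "0 \<le> m" "m < \<tau>" using \<open>\<epsilon>>0\<close> tau \<open>\<tau> \<noteq> 0\<close> unfolding m_def by auto
      have "m \<notin> A" using low m by force
      hence "F m \<noteq> F t" using m tau unfolding A_def by auto
      moreover have "F m \<le> F \<tau>" using m by (intro mono_onD[OF assms(2)]) auto
      moreover have "F \<tau> \<le> F (\<tau> + \<epsilon>)" using tau(1) \<open>\<epsilon>>0\<close> by (intro mono_onD[OF assms(2)]) auto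
      ultimately show "F (max 0 (\<tau> - \<epsilon>)) < F (\<tau> + \<epsilon>)" using tau unfolding m_def by linarith
    qed
    hence "neg_part (g \<tau>) = F t" using assms(6) tau Fnn[of \<tau>] unfolding neg_part_def by auto
    thus ?thesis using tau by auto
  qed
  then obtain s0 where s0: "s0 \<in> {0..t}" "neg_part (g s0) = F t" by blast
  have "(SUP s\<in>{0..t}. neg_part (g s)) = F t"
  proof (rule cSup_eq_maximum)
    show "F t \<in> (\<lambda>s. neg_part (g s)) ` {0..t}" by (rule image_eqI[where x=s0]) (use s0 in auto)
    fix x assume "x \<in> (\<lambda>s. neg_part (g s)) ` {0..t}" thus "x \<le> F t" by (rule ub)
  qed
  thus ?thesis by (rule sym)
qed

theorem mainTheorem2:
  fixes \<gamma> :: real and S P L U :: "real \<Rightarrow> real"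
  assumes gamma: "0 < \<gamma>" "\<gamma> < 1"
    and S_cont: "continuous_on {0..} S"
    and S_pos: "\<forall>t\<ge>0. S t > 0"
    and P_pos: "\<forall>t\<ge>0. P t > 0"
    and init_band: "\<gamma> * P 0 \<le> S 0" "S 0 \<le> P 0 / \<gamma>"
    and decomp: "\<forall>t\<ge>0. ln (P t) = ln (P 0) + U t - L t"
    and cum_init: "L 0 = 0" "U 0 = 0"
    and cum_mono: "mono_on {0..} L" "mono_on {0..} U"
    and cum_rc: "\<forall>t\<ge>0. continuous (at_right t) L" "\<forall>t\<ge>0. continuous (at_right t) U"
    and no_arb_band: "\<forall>t\<ge>0. \<gamma> * S t \<le> P t \<and> P t \<le> S t / \<gamma>"
    and arb_sell: "\<forall>t. incr_point L t \<longrightarrow> P t = S t / \<gamma>"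
    and arb_buy: "\<forall>t. incr_point U t \<longrightarrow> P t = \<gamma> * S t"
  shows
    "(\<forall>t\<ge>0. ln (S t / P t) = ln (S t) - ln (P 0) + L t - U t
              \<and> ln \<gamma> \<le> ln (S t / P t) \<and> ln (S t / P t) \<le> - ln \<gamma>)
     \<and> mono_on {0..} L \<and> mono_on {0..} U
     \<and> continuous_on {0..} L \<and> continuous_on {0..} U \<and> L 0 = 0 \<and> U 0 = 0
     \<and> (\<forall>t. incr_point L t \<longrightarrow> ln (S t / P t) = ln \<gamma>)
     \<and> (\<forall>t. incr_point U t \<longrightarrow> ln (S t / P t) = - ln \<gamma>)
     \<and> (\<forall>t\<ge>0. L t = (SUP s\<in>{0..t}. neg_part (- ln (\<gamma> * P 0) + ln (S s) - U s))
              \<and> U t = (SUP s\<in>{0..t}. neg_part (ln (P 0 / \<gamma>) - ln (S s) - L s)))"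
proof -
  define Z where "Z t = ln (S t) - ln (P 0) + L t - U t" for t
  have lnP: "ln (S t / P t) = Z t" if "t \<ge> 0" for t
  proof -
    have "S t > 0" "P t > 0" "ln (P t) = ln (P 0) + U t - L t" using that S_pos P_pos decomp by blast+
    thus ?thesis unfolding Z_def by (simp add: ln_div)
  qed
  have Zb: "ln \<gamma> \<le> Z t \<and> Z t \<le> - ln \<gamma>" if t: "t \<ge> 0" for t
  proof -
    have sp: "S t > 0" "P t > 0" using S_pos P_pos t by auto
    have b1: "\<gamma> * S t \<le> P t" "P t \<le> S t / \<gamma>" using no_arb_band t by auto
    have "ln (\<gamma> * S t) \<le> ln (P t)" using b1 sp gamma by simp
    hence 1: "ln \<gamma> + ln (S t) \<le> ln (P t)" using sp gamma by (simp add: ln_mult)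
    have "ln (P t) \<le> ln (S t / \<gamma>)" using b1 sp gamma by simp
    hence 2: "ln (P t) \<le> ln (S t) - ln \<gamma>" using sp gamma by (simp add: ln_div)
    have "Z t = ln (S t) - ln (P t)" using lnP[OF t] sp by (simp add: ln_div)
    thus ?thesis using 1 2 by linarith
  qed
  have ZL: "Z t = ln \<gamma>" if "incr_point L t" for t
  proof -
    have t: "t \<ge> 0" using that unfolding incr_point_def by simp
    have "P t = S t / \<gamma>" using arb_sell that by blast
    moreover have "P t > 0" using P_pos t by blast
    ultimately have "S t / P t = \<gamma>" using gamma by (simp add: field_simps)
    thus ?thesis using lnP[OF t] by simp
  qed
  have ZU: "Z t = - ln \<gamma>" if "incr_point U t" for t
  proof -
    have t: "t \<ge> 0" using that unfolding incr_point_def by simp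
    have "P t = \<gamma> * S t" using arb_buy that by blast
    moreover have "P t > 0" "S t > 0" using P_pos S_pos t by blast+
    ultimately have "S t / P t = 1 / \<gamma>" using gamma by (simp add: field_simps)
    thus ?thesis using lnP[OF t] gamma by (simp add: ln_div)
  qed
  have both: False if "incr_point L t" "incr_point U t" for t
  proof -
    have "ln \<gamma> = 0" using ZL[OF that(1)] ZU[OF that(2)] by simp
    thus False using gamma by simp
  qed
  have lnS_cont: "continuous_on {0..} (\<lambda>x. ln (S x))"
  proof (rule continuous_on_ln[OF S_cont])
    show "\<forall>x\<in>{0..}. S x \<noteq> 0"
    proof
      fix x :: real assume "x \<in> {0..}"
      hence "S x > 0" using S_pos by simp
      thus "S x \<noteq> 0" by simp
    qed
  qed
  have lnS_w: "continuous (at t within {0..}) (\<lambda>x. ln (S x))" if "t \<ge> 0" for t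
    using lnS_cont that unfolding continuous_on_eq_continuous_within by simp
  have mlnS_w: "continuous (at t within {0..}) (\<lambda>x. - ln (S x))" if "t \<ge> 0" for t
    using lnS_w[OF that] by (rule continuous_minus)
  have gapL: "\<not> (\<exists>e>0. \<forall>s. 0\<le>s \<and> s<t \<longrightarrow> L s \<le> L t - e)" if t: "t > 0" for t
  proof
    assume "\<exists>e>0. \<forall>s. 0\<le>s \<and> s<t \<longrightarrow> L s \<le> L t - e"
    then obtain e where e: "e > 0" "\<forall>s. 0\<le>s \<and> s<t \<longrightarrow> L s \<le> L t - e" by blast
    have iL: "incr_point L t" using left_gap_incr[OF cum_mono(1) t e(1) e(2)] .
    have "\<forall>s. 0\<le>s \<and> s<t \<longrightarrow> U s \<le> U t + (ln (S s) - ln (S t)) - e"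
    proof (intro allI impI)
      fix s assume s: "0\<le>s \<and> s<t"
      have "Z s \<ge> Z t" using Zb[of s] s ZL[OF iL] by simp
      thus "U s \<le> U t + (ln (S s) - ln (S t)) - e" using e(2)[rule_format, of s] s unfolding Z_def by linarith
    qed
    from transfer_gap[OF cum_mono(2) t e(1) lnS_w[of t] this] t
    obtain e' where "e' > 0" "\<forall>s. 0\<le>s \<and> s<t \<longrightarrow> U s \<le> U t - e'" by auto
    hence "incr_point U t" using left_gap_incr[OF cum_mono(2) t] by blast
    thus False using both iL by blast
  qed
  have gapU: "\<not> (\<exists>e>0. \<forall>s. 0\<le>s \<and> s<t \<longrightarrow> U s \<le> U t - e)" if t: "t > 0" for t
  proof
    assume "\<exists>e>0. \<forall>s. 0\<le>s \<and> s<t \<longrightarrow> U s \<le> U t - e"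
    then obtain e where e: "e > 0" "\<forall>s. 0\<le>s \<and> s<t \<longrightarrow> U s \<le> U t - e" by blast
    have iU: "incr_point U t" using left_gap_incr[OF cum_mono(2) t e(1) e(2)] .
    have "\<forall>s. 0\<le>s \<and> s<t \<longrightarrow> L s \<le> L t + (- ln (S s) - - ln (S t)) - e"
    proof (intro allI impI)
      fix s assume s: "0\<le>s \<and> s<t"
      have "Z s \<le> Z t" using Zb[of s] s ZU[OF iU] by simp
      thus "L s \<le> L t + (- ln (S s) - - ln (S t)) - e" using e(2)[rule_format, of s] s unfolding Z_def by linarith
    qed
    from transfer_gap[OF cum_mono(1) t e(1) mlnS_w[of t] this] t
    obtain e' where "e' > 0" "\<forall>s. 0\<le>s \<and> s<t \<longrightarrow> L s \<le> L t - e'" by auto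
    hence "incr_point L t" using left_gap_incr[OF cum_mono(1) t] by blast
    thus False using both iU by blast
  qed
  have contL: "continuous_on {0..} L"
    using cont_from_no_gap[OF cum_mono(1) cum_rc(1)] gapL by blast
  have contU: "continuous_on {0..} U"
    using cont_from_no_gap[OF cum_mono(2) cum_rc(2)] gapU by blast
  have lgP: "ln (\<gamma> * P 0) = ln \<gamma> + ln (P 0)" "ln (P 0 / \<gamma>) = ln (P 0) - ln \<gamma>"
  proof -
    have "P 0 > 0" using P_pos by simp
    thus "ln (\<gamma> * P 0) = ln \<gamma> + ln (P 0)" "ln (P 0 / \<gamma>) = ln (P 0) - ln \<gamma>"
      using gamma by (simp_all add: ln_mult ln_div)
  qed
  have supL: "L t = (SUP s\<in>{0..t}. neg_part (- ln (\<gamma> * P 0) + ln (S s) - U s))" if "t \<ge> 0" for t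
  proof (rule sup_formula[OF contL cum_mono(1) cum_init(1) that])
    show "\<forall>s\<ge>0. - (- ln (\<gamma> * P 0) + ln (S s) - U s) \<le> L s"
    proof (intro allI impI)
      fix s :: real assume "s \<ge> 0"
      from Zb[OF this] show "- (- ln (\<gamma> * P 0) + ln (S s) - U s) \<le> L s"
        using lgP unfolding Z_def by linarith
    qed
    show "\<forall>s. incr_point L s \<longrightarrow> - (- ln (\<gamma> * P 0) + ln (S s) - U s) = L s"
    proof (intro allI impI)
      fix s :: real assume "incr_point L s"
      from ZL[OF this] show "- (- ln (\<gamma> * P 0) + ln (S s) - U s) = L s"
        using lgP unfolding Z_def by linarith
    qed
  qed
  have supU: "U t = (SUP s\<in>{0..t}. neg_part (ln (P 0 / \<gamma>) - ln (S s) - L s))" if "t \<ge> 0" for t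
  proof (rule sup_formula[OF contU cum_mono(2) cum_init(2) that])
    show "\<forall>s\<ge>0. - (ln (P 0 / \<gamma>) - ln (S s) - L s) \<le> U s"
    proof (intro allI impI)
      fix s :: real assume "s \<ge> 0"
      from Zb[OF this] show "- (ln (P 0 / \<gamma>) - ln (S s) - L s) \<le> U s"
        using lgP unfolding Z_def by linarith
    qed
    show "\<forall>s. incr_point U s \<longrightarrow> - (ln (P 0 / \<gamma>) - ln (S s) - L s) = U s"
    proof (intro allI impI)
      fix s :: real assume "incr_point U s"
      from ZU[OF this] show "- (ln (P 0 / \<gamma>) - ln (S s) - L s) = U s"
        using lgP unfolding Z_def by linarith
    qed
  qed
  have iL0: "t \<ge> 0" if "incr_point L t" for t using that unfolding incr_point_def by simp
  have iU0: "t \<ge> 0" if "incr_point U t" for t using that unfolding incr_point_def by simp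
  have A: "\<forall>t\<ge>0. ln (S t / P t) = ln (S t) - ln (P 0) + L t - U t
              \<and> ln \<gamma> \<le> ln (S t / P t) \<and> ln (S t / P t) \<le> - ln \<gamma>"
    using lnP Zb unfolding Z_def by simp
  have B: "\<forall>t. incr_point L t \<longrightarrow> ln (S t / P t) = ln \<gamma>" using lnP ZL iL0 by simp
  have C: "\<forall>t. incr_point U t \<longrightarrow> ln (S t / P t) = - ln \<gamma>" using lnP ZU iU0 by simp
  show ?thesis using A B C contL contU cum_mono cum_init supL supU by blast
qed

end
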